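(* Let $\models$ be an intersective mixed consequence truth-relation on a finite set $V$ of truth values (constant expressive setting). If $\models$ admits a G-negation, then every minimal representation $\models_{\mathcal{D}_p^1,\mathcal{D}_c^1}\cap\dots\cap\models_{\mathcal{D}_p^K,\mathcal{D}_c^K}$ of $\models$ satisfies: (N1) for $i\neq j$ there is no inclusion $\mathcal{D}_p^i\subseteq\mathcal{D}_p^j$ nor $\mathcal{D}_c^i\subseteq\mathcal{D}_c^j$; (N2) for all $i,j$: if $\mathcal{D}_p^i\subseteq\mathcal{D}_c^j$ then $\mathcal{D}_p^j\subseteq\mathcal{D}_c^i$, and if $\mathcal{D}_c^j\subseteq\mathcal{D}_p^i$ then $\mathcal{D}_c^i\subseteq\mathcal{D}_p^j$.
   Context: $V$ contains distinct $1,0$; sets of designated values: $\mathcal{D}\subseteq V$, $1\in\mathcal{D}$, $0\notin\mathcal{D}$. $\gamma\models_{\mathcal{D}_p,\mathcal{D}_c}\delta$ iff ($\gamma\subseteq\mathcal{D}_p\Rightarrow\delta\cap\mathcal{D}_c\neq\emptyset$). An intersective mixed truth-relation is a finite intersection of such; a representation is a list of mixed relations whose intersection it is, minimal if of least possible length. Semantics: valuations mapping atoms to $V$, connectives interpreted by fixed truth functions, extended compositionally, every assignment to finitely many distinct atoms realized; constant expressive: every value is the constant value of some formula. $\Gamma\vdash\Delta$ iff $v(\Gamma)\models v(\Delta)$ for all $v$. A G-negation is a unary connective $\neg$ (interpreted by some truth function) with, for all $\Gamma,\Delta,A$: $\Gamma\cup\{\neg A\}\vdash\Delta$ iff $\Gamma\vdash\{A\}\cup\Delta$;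 and $\Gamma\vdash\{\neg A\}\cup\Delta$ iff $\Gamma\cup\{A\}\vdash\Delta$. *)

theory Defs
  imports Main
begin

definition mixed :: "'v set \<Rightarrow> 'v set \<Rightarrow> 'v set \<Rightarrow> 'v set \<Rightarrow> bool" where
  "mixed Dp Dc \<gamma> \<delta> \<longleftrightarrow> (\<gamma> \<subseteq> Dp \<longrightarrow> \<delta> \<inter> Dc \<noteq> {})"

definition designated :: "'v set \<Rightarrow> 'v \<Rightarrow> 'v \<Rightarrow> 'v set \<Rightarrow> bool" where
  "designated V one zero D \<longleftrightarrow> D \<subseteq> V \<and> one \<in> D \<and> zero \<notin> D"

definition representation ::
  "'v set \<Rightarrow> 'v \<Rightarrow> 'v \<Rightarrow> ('v set \<Rightarrow> 'v set \<Rightarrow> bool) \<Rightarrow> ('v set \<times> 'v set) list \<Rightarrow> bool" where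
  "representation V one zero R reps \<longleftrightarrow>
     reps \<noteq> [] \<and>
     (\<forall>(p, c) \<in> set reps. designated V one zero p \<and> designated V one zero c) \<and>
     (\<forall>\<gamma> \<delta>. \<gamma> \<subseteq> V \<longrightarrow> \<delta> \<subseteq> V \<longrightarrow>
        (R \<gamma> \<delta> \<longleftrightarrow> (\<forall>(p, c) \<in> set reps. mixed p c \<gamma> \<delta>)))"

definition intersective :: "'v set \<Rightarrow> 'v \<Rightarrow> 'v \<Rightarrow> ('v set \<Rightarrow> 'v set \<Rightarrow> bool) \<Rightarrow> bool" where
  "intersective V one zero R \<longleftrightarrow> (\<exists>reps. representation V one zero R reps)"

definition minimal_representation ::
  "'v set \<Rightarrow> 'v \<Rightarrow> 'v \<Rightarrow> ('v set \<Rightarrow> 'v set \<Rightarrow> bool) \<Rightarrow> ('v set \<times> 'v set) list \<Rightarrow> bool" where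
  "minimal_representation V one zero R reps \<longleftrightarrow>
     representation V one zero R reps \<and>
     (\<forall>reps'. representation V one zero R reps' \<longrightarrow> length reps \<le> length reps')"

datatype 'c fm = Atom nat | Conn 'c "'c fm list"

fun wff :: "('c \<Rightarrow> nat) \<Rightarrow> 'c fm \<Rightarrow> bool" where
  "wff ar (Atom n) = True"
| "wff ar (Conn c fs) = (length fs = ar c \<and> (\<forall>f \<in> set fs. wff ar f))"

fun eval :: "('c \<Rightarrow> 'v list \<Rightarrow> 'v) \<Rightarrow> (nat \<Rightarrow> 'v) \<Rightarrow> 'c fm \<Rightarrow> 'v" where
  "eval I v (Atom n) = v n"
| "eval I v (Conn c fs) = I c (map (eval I v) fs)"

definition valuation :: "'v set \<Rightarrow> (nat \<Rightarrow> 'v) \<Rightarrow> bool" where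
  "valuation V v \<longleftrightarrow> (\<forall>n. v n \<in> V)"

definition truth_functions :: "'v set \<Rightarrow> ('c \<Rightarrow> nat) \<Rightarrow> ('c \<Rightarrow> 'v list \<Rightarrow> 'v) \<Rightarrow> bool" where
  "truth_functions V ar I \<longleftrightarrow>
     (\<forall>c xs. length xs = ar c \<longrightarrow> set xs \<subseteq> V \<longrightarrow> I c xs \<in> V)"

definition constant_expressive :: "'v set \<Rightarrow> ('c \<Rightarrow> nat) \<Rightarrow> ('c \<Rightarrow> 'v list \<Rightarrow> 'v) \<Rightarrow> bool" where
  "constant_expressive V ar I \<longleftrightarrow>
     (\<forall>x \<in> V. \<exists>A. wff ar A \<and> (\<forall>v. valuation V v \<longrightarrow> eval I v A = x))"

definition conseq ::
  "'v set \<Rightarrow> ('c \<Rightarrow> 'v list \<Rightarrow> 'v) \<Rightarrow> ('v set \<Rightarrow> 'v set \<Rightarrow> bool) \<Rightarrow> 'c fm set \<Rightarrow> 'c fm set \<Rightarrow> bool" where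
  "conseq V I R \<Gamma> \<Delta> \<longleftrightarrow> (\<forall>v. valuation V v \<longrightarrow> R (eval I v ` \<Gamma>) (eval I v ` \<Delta>))"

definition G_negation ::
  "'v set \<Rightarrow> ('c \<Rightarrow> nat) \<Rightarrow> ('c \<Rightarrow> 'v list \<Rightarrow> 'v) \<Rightarrow> ('v set \<Rightarrow> 'v set \<Rightarrow> bool) \<Rightarrow> 'c \<Rightarrow> bool" where
  "G_negation V ar I R neg \<longleftrightarrow> ar neg = 1 \<and>
     (\<forall>\<Gamma> \<Delta> A. (\<forall>B \<in> \<Gamma>. wff ar B) \<longrightarrow> (\<forall>B \<in> \<Delta>. wff ar B) \<longrightarrow> wff ar A \<longrightarrow>
        (conseq V I R (\<Gamma> \<union> {Conn neg [A]}) \<Delta> \<longleftrightarrow> conseq V I R \<Gamma> ({A} \<union> \<Delta>)) \<and>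
        (conseq V I R \<Gamma> ({Conn neg [A]} \<union> \<Delta>) \<longleftrightarrow> conseq V I R (\<Gamma> \<union> {A}) \<Delta>))"

end

theory Submission
  imports Defs
begin

lemma rep_sub:
  assumes "representation V one zero R reps" "reps' \<noteq> []" "set reps' \<subseteq> set reps"
    "\<forall>x\<in>set reps. \<exists>y\<in>set reps'. fst x \<subseteq> fst y \<and> snd y \<subseteq> snd x"
  shows "representation V one zero R reps'"
proof -
  have "\<forall>\<gamma> \<delta>. \<gamma> \<subseteq> V \<longrightarrow> \<delta> \<subseteq> V \<longrightarrow>
        (R \<gamma> \<delta> \<longleftrightarrow> (\<forall>(p, c) \<in> set reps'. mixed p c \<gamma> \<delta>))"
  proof (intro allI impI)
    fix g d assume gd: "g \<subseteq> V" "d \<subseteq> V"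
    have "(\<forall>(p, c) \<in> set reps'. mixed p c g d) \<longleftrightarrow> (\<forall>(p, c) \<in> set reps. mixed p c g d)"
    proof
      assume H: "\<forall>(p, c) \<in> set reps'. mixed p c g d"
      show "\<forall>(p, c) \<in> set reps. mixed p c g d"
      proof (intro ballI, clarify)
        fix p c assume "(p, c) \<in> set reps"
        then obtain y where y: "y \<in> set reps'" "p \<subseteq> fst y" "snd y \<subseteq> c" using assms(4) by force
        have "mixed (fst y) (snd y) g d" using H y(1) by (cases y) auto
        then show "mixed p c g d" using y unfolding mixed_def by blast
      qed
    next
      assume "\<forall>(p, c) \<in> set reps. mixed p c g d"
      then show "\<forall>(p, c) \<in> set reps'. mixed p c g d" using assms(3) by blast
    qed
    moreover have "R g d \<longleftrightarrow> (\<forall>(p, c) \<in> set reps. mixed p c g d)"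
      using assms(1) gd unfolding representation_def by auto
    ultimately show "R g d \<longleftrightarrow> (\<forall>(p, c) \<in> set reps'. mixed p c g d)"
      by simp
  qed
  moreover have "\<forall>(p, c) \<in> set reps'. designated V one zero p \<and> designated V one zero c"
    using assms(1,3) unfolding representation_def by fast
  ultimately show ?thesis using assms(2) unfolding representation_def by (intro conjI)
qed

lemma min_distinct:
  assumes "minimal_representation V one zero R reps"
  shows "distinct reps"
proof (rule ccontr)
  assume nd: "\<not> distinct reps"
  have r: "representation V one zero R reps" using assms(1) unfolding minimal_representation_def by blast
  have "reps \<noteq> []" using r unfolding representation_def by blast
  then have "remdups reps \<noteq> []" by simp
  then have "representation V one zero R (remdups reps)"
    by (intro rep_sub[OF r]) auto
  moreover have "length (remdups reps) < length reps"
    using nd length_remdups_eq[of reps] length_remdups_leq[of reps] remdups_id_iff_distinct[of reps] by linarith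
  moreover have "\<forall>reps'. representation V one zero R reps' \<longrightarrow> length reps \<le> length reps'"
    using assms(1) unfolding minimal_representation_def by blast
  ultimately show False by (meson leD)
qed

lemma min_antichain:
  assumes "minimal_representation V one zero R reps"
    "(p, c) \<in> set reps" "(p', c') \<in> set reps" "(p, c) \<noteq> (p', c')" "p \<subseteq> p'" "c' \<subseteq> c"
  shows False
proof -
  have r: "representation V one zero R reps" using assms(1) unfolding minimal_representation_def by blast
  let ?r = "removeAll (p, c) reps"
  have "(p', c') \<in> set ?r" using assms(3,4) by auto
  then have ne: "?r \<noteq> []" by (metis empty_iff empty_set)
  have "representation V one zero R ?r"
  proof (rule rep_sub[OF r ne])
    show "set ?r \<subseteq> set reps" by auto
    show "\<forall>x\<in>set reps. \<exists>y\<in>set ?r. fst x \<subseteq> fst y \<and> snd y \<subseteq> snd x"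
    proof
      fix x assume x: "x \<in> set reps"
      show "\<exists>y\<in>set ?r. fst x \<subseteq> fst y \<and> snd y \<subseteq> snd x"
      proof (cases "x = (p, c)")
        case True
        then show ?thesis using assms(3,4,5,6) by (intro bexI[of _ "(p', c')"]) auto
      next
        case False
        then show ?thesis using x by (intro bexI[of _ x]) auto
      qed
    qed
  qed
  moreover have "length ?r < length reps" using assms(2) by (rule length_removeAll_less)
  moreover have "\<forall>reps'. representation V one zero R reps' \<longrightarrow> length reps \<le> length reps'"
    using assms(1) unfolding minimal_representation_def by blast
  ultimately show False by (meson leD)
qed

lemma lemB:
  assumes "minimal_representation V one zero R reps"
    "(p, c) \<in> set reps" "g \<subseteq> V" "d \<subseteq> V" "\<not> R g d" "p \<subseteq> g" "V - c \<subseteq> d"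
  shows "g = p \<and> d \<inter> c = {}"
proof -
  have r: "representation V one zero R reps" using assms(1) unfolding minimal_representation_def by blast
  then obtain p' c' where pc': "(p', c') \<in> set reps" "\<not> mixed p' c' g d"
    using assms(3-5) unfolding representation_def by blast
  then have h: "g \<subseteq> p'" "d \<inter> c' = {}" unfolding mixed_def by auto
  have "c' \<subseteq> V" using r pc'(1) unfolding representation_def designated_def by blast
  then have "c' \<subseteq> c" using h(2) assms(7) by blast
  moreover have "p \<subseteq> p'" using h assms(6) by blast
  ultimately have "(p, c) = (p', c')" using min_antichain[OF assms(1,2) pc'(1)] by blast
  then have "p' = p" "c' = c" by auto
  then show ?thesis using h assms(6) by blast
qed

lemma conseq_const:
  assumes "\<And>v. valuation V v \<Longrightarrow> eval I v ` \<Gamma> = g \<and> eval I v ` \<Delta> = d" "one \<in> V"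
  shows "conseq V I R \<Gamma> \<Delta> = R g d"
proof -
  have "valuation V (\<lambda>_. one)" using assms(2) valuation_def by blast
  then show ?thesis unfolding conseq_def using assms(1) by metis
qed

theorem theorem7p8:
  fixes V :: "'v set" and one zero :: 'v
    and R :: "'v set \<Rightarrow> 'v set \<Rightarrow> bool"
    and ar :: "'c \<Rightarrow> nat" and I :: "'c \<Rightarrow> 'v list \<Rightarrow> 'v" and neg :: 'c
    and reps :: "('v set \<times> 'v set) list"
  assumes "finite V" and "one \<in> V" and "zero \<in> V" and "one \<noteq> zero"
    and "truth_functions V ar I"
    and "constant_expressive V ar I"
    and "intersective V one zero R"
    and "G_negation V ar I R neg"
    and "minimal_representation V one zero R reps"
  shows "(\<forall>i < length reps. \<forall>j < length reps. i \<noteq> j \<longrightarrow>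
            \<not> fst (reps ! i) \<subseteq> fst (reps ! j) \<and> \<not> snd (reps ! i) \<subseteq> snd (reps ! j))
       \<and> (\<forall>i < length reps. \<forall>j < length reps.
            (fst (reps ! i) \<subseteq> snd (reps ! j) \<longrightarrow> fst (reps ! j) \<subseteq> snd (reps ! i)) \<and>
            (snd (reps ! j) \<subseteq> fst (reps ! i) \<longrightarrow> snd (reps ! i) \<subseteq> fst (reps ! j)))"
proof -
  define n where "n a = I neg [a]" for a
  have nV: "n a \<in> V" if "a \<in> V" for a
    using assms(5,8) that unfolding truth_functions_def G_negation_def n_def by auto
  define cf where "cf x = (SOME A. wff ar A \<and> (\<forall>v. valuation V v \<longrightarrow> eval I v A = x))" for x
  have cf: "wff ar (cf x) \<and> (\<forall>v. valuation V v \<longrightarrow> eval I v (cf x) = x)" if "x \<in> V" for x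
  proof -
    have "\<exists>A. wff ar A \<and> (\<forall>v. valuation V v \<longrightarrow> eval I v A = x)"
      using assms(6) that unfolding constant_expressive_def by blast
    then show ?thesis unfolding cf_def by (rule someI_ex)
  qed
  have img: "eval I v ` (cf ` g) = g" if "g \<subseteq> V" "valuation V v" for g v
  proof -
    have "eval I v ` (cf ` g) = (\<lambda>x. eval I v (cf x)) ` g" by (simp add: image_image)
    also have "\<dots> = (\<lambda>x. x) ` g" using cf that by (intro image_cong) auto
    finally show ?thesis by simp
  qed
  have negev: "eval I v (Conn neg [cf a]) = n a" if "a \<in> V" "valuation V v" for a v
    using cf that n_def by simp
  have wffn: "wff ar (Conn neg [cf a])" if "a \<in> V" for a
    using cf that assms(8) unfolding G_negation_def by simp
  have G: "(conseq V I R (\<Gamma> \<union> {Conn neg [A]}) \<Delta> \<longleftrightarrow> conseq V I R \<Gamma> ({A} \<union> \<Delta>)) \<and>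
        (conseq V I R \<Gamma> ({Conn neg [A]} \<union> \<Delta>) \<longleftrightarrow> conseq V I R (\<Gamma> \<union> {A}) \<Delta>)"
    if "\<forall>B \<in> \<Gamma>. wff ar B" "\<forall>B \<in> \<Delta>. wff ar B" "wff ar A" for \<Gamma> \<Delta> A
    using assms(8) that unfolding G_negation_def by blast
  have G1: "R (g \<union> {n a}) d = R g ({a} \<union> d)" if "g \<subseteq> V" "d \<subseteq> V" "a \<in> V" for g d a
  proof -
    have "conseq V I R (cf ` g \<union> {Conn neg [cf a]}) (cf ` d) = R (g \<union> {n a}) d"
      by (rule conseq_const[OF _ assms(2)]) (use that img negev in auto)
    moreover have "conseq V I R (cf ` g) ({cf a} \<union> cf ` d) = R g ({a} \<union> d)"
      by (rule conseq_const[OF _ assms(2)]) (use that img cf in auto)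
    moreover have "conseq V I R (cf ` g \<union> {Conn neg [cf a]}) (cf ` d) = conseq V I R (cf ` g) ({cf a} \<union> cf ` d)"
      using G[of "cf ` g" "cf ` d" "cf a"] that cf by blast
    ultimately show ?thesis by simp
  qed
  have G2: "R g ({n a} \<union> d) = R (g \<union> {a}) d" if "g \<subseteq> V" "d \<subseteq> V" "a \<in> V" for g d a
  proof -
    have "conseq V I R (cf ` g) ({Conn neg [cf a]} \<union> cf ` d) = R g ({n a} \<union> d)"
      by (rule conseq_const[OF _ assms(2)]) (use that img negev in auto)
    moreover have "conseq V I R (cf ` g \<union> {cf a}) (cf ` d) = R (g \<union> {a}) d"
      by (rule conseq_const[OF _ assms(2)]) (use that img cf in auto)
    moreover have "conseq V I R (cf ` g) ({Conn neg [cf a]} \<union> cf ` d) = conseq V I R (cf ` g \<union> {cf a}) (cf ` d)"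
      using G[of "cf ` g" "cf ` d" "cf a"] that cf by blast
    ultimately show ?thesis by simp
  qed
  have r: "representation V one zero R reps" using assms(9) unfolding minimal_representation_def by blast
  have desg: "p \<subseteq> V \<and> c \<subseteq> V" if "(p, c) \<in> set reps" for p c
    using r that unfolding representation_def designated_def by blast
  have repR: "R g d \<longleftrightarrow> (\<forall>y\<in>set reps. mixed (fst y) (snd y) g d)" if "g \<subseteq> V" "d \<subseteq> V" for g d
  proof -
    have "R g d \<longleftrightarrow> (\<forall>(p, c) \<in> set reps. mixed p c g d)" using r that unfolding representation_def by blast
    then show ?thesis by (simp add: case_prod_beta)
  qed
  have F: "(x \<notin> c \<longleftrightarrow> n x \<in> p) \<and> (x \<in> p \<longleftrightarrow> n x \<notin> c)"
    if pc: "(p, c) \<in> set reps" and x: "x \<in> V" for p c x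
  proof -
    have pV: "p \<subseteq> V" and cV: "c \<subseteq> V" using pc desg by auto
    have dV: "V - c \<subseteq> V" by blast
    have "\<not> mixed p c p (V - c)" unfolding mixed_def by blast
    then have nR: "\<not> R p (V - c)" using repR[OF pV dV] pc by force
    have nx: "n x \<in> V" using nV x by blast
    have e1: "R (p \<union> {n x}) (V - c) = R p ({x} \<union> (V - c))" by (rule G1[OF pV dV x])
    have e2: "R p ({n x} \<union> (V - c)) = R (p \<union> {x}) (V - c)" by (rule G2[OF pV dV x])
    have a1: "n x \<in> p" if "x \<notin> c"
    proof -
      have "{x} \<union> (V - c) = V - c" using that x by blast
      then have "\<not> R (p \<union> {n x}) (V - c)" using e1 nR by simp
      moreover have "p \<union> {n x} \<subseteq> V" using pV nx by blast
      ultimately have "p \<union> {n x} = p" using lemB[OF assms(9) pc _ dV _ _ order_refl] by blast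
      then show ?thesis by blast
    qed
    have a2: "x \<notin> c" if "n x \<in> p"
    proof -
      have "p \<union> {n x} = p" using that by blast
      then have "\<not> R p ({x} \<union> (V - c))" using e1 nR by simp
      moreover have "{x} \<union> (V - c) \<subseteq> V" using x by blast
      ultimately have "({x} \<union> (V - c)) \<inter> c = {}" using lemB[OF assms(9) pc pV _ _ order_refl] by blast
      then show ?thesis by blast
    qed
    have a3: "n x \<notin> c" if "x \<in> p"
    proof -
      have "p \<union> {x} = p" using that by blast
      then have "\<not> R p ({n x} \<union> (V - c))" using e2 nR by simp
      moreover have "{n x} \<union> (V - c) \<subseteq> V" using nx by blast
      ultimately have "({n x} \<union> (V - c)) \<inter> c = {}" using lemB[OF assms(9) pc pV _ _ order_refl] by blast
      then show ?thesis by blast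
    qed
    have a4: "x \<in> p" if "n x \<notin> c"
    proof -
      have "{n x} \<union> (V - c) = V - c" using that nx by blast
      then have "\<not> R (p \<union> {x}) (V - c)" using e2 nR by simp
      moreover have "p \<union> {x} \<subseteq> V" using pV x by blast
      ultimately have "p \<union> {x} = p" using lemB[OF assms(9) pc _ dV _ _ order_refl] by blast
      then show ?thesis by blast
    qed
    show ?thesis using a1 a2 a3 a4 by blast
  qed
  have subV: "fst (reps ! i) \<subseteq> V \<and> snd (reps ! i) \<subseteq> V" if "i < length reps" for i
    using desg[of "fst (reps ! i)" "snd (reps ! i)"] nth_mem[OF that] by simp
  have Fi: "(x \<notin> snd (reps ! i) \<longleftrightarrow> n x \<in> fst (reps ! i)) \<and> (x \<in> fst (reps ! i) \<longleftrightarrow> n x \<notin> snd (reps ! i))"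
    if "i < length reps" "x \<in> V" for i x
    using F[of "fst (reps ! i)" "snd (reps ! i)" x] nth_mem[OF that(1)] that(2) by simp
  have dist: "distinct reps" using min_distinct[OF assms(9)] .
  have anti: "\<not> (fst (reps ! i) \<subseteq> fst (reps ! j) \<and> snd (reps ! j) \<subseteq> snd (reps ! i))"
    if "i < length reps" "j < length reps" "i \<noteq> j" for i j
  proof
    assume h: "fst (reps ! i) \<subseteq> fst (reps ! j) \<and> snd (reps ! j) \<subseteq> snd (reps ! i)"
    have "reps ! i \<noteq> reps ! j" using dist that nth_eq_iff_index_eq by blast
    then show False using min_antichain[OF assms(9), of "fst (reps ! i)" "snd (reps ! i)" "fst (reps ! j)" "snd (reps ! j)"]
        h nth_mem[OF that(1)] nth_mem[OF that(2)] by simp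
  qed
  have N1: "\<not> fst (reps ! i) \<subseteq> fst (reps ! j) \<and> \<not> snd (reps ! i) \<subseteq> snd (reps ! j)"
    if "i < length reps" "j < length reps" "i \<noteq> j" for i j
  proof
    show "\<not> fst (reps ! i) \<subseteq> fst (reps ! j)"
    proof
      assume h: "fst (reps ! i) \<subseteq> fst (reps ! j)"
      have "snd (reps ! j) \<subseteq> snd (reps ! i)"
      proof
        fix x assume xj: "x \<in> snd (reps ! j)"
        then have x: "x \<in> V" using subV that by blast
        show "x \<in> snd (reps ! i)" using Fi[OF that(1) x] Fi[OF that(2) x] h xj by blast
      qed
      then show False using anti that h by blast
    qed
    show "\<not> snd (reps ! i) \<subseteq> snd (reps ! j)"
    proof
      assume h: "snd (reps ! i) \<subseteq> snd (reps ! j)"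
      have "fst (reps ! j) \<subseteq> fst (reps ! i)"
      proof
        fix x assume xj: "x \<in> fst (reps ! j)"
        then have x: "x \<in> V" using subV that by blast
        show "x \<in> fst (reps ! i)" using Fi[OF that(1) x] Fi[OF that(2) x] h xj by blast
      qed
      then show False using anti[of j i] that h by blast
    qed
  qed
  have N2: "(fst (reps ! i) \<subseteq> snd (reps ! j) \<longrightarrow> fst (reps ! j) \<subseteq> snd (reps ! i)) \<and>
            (snd (reps ! j) \<subseteq> fst (reps ! i) \<longrightarrow> snd (reps ! i) \<subseteq> fst (reps ! j))"
    if "i < length reps" "j < length reps" for i j
  proof (intro conjI impI subsetI)
    fix x assume h: "fst (reps ! i) \<subseteq> snd (reps ! j)" and xj: "x \<in> fst (reps ! j)"
    then have x: "x \<in> V" using subV that by blast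
    show "x \<in> snd (reps ! i)" using Fi[OF that(1) x] Fi[OF that(2) x] h xj by blast
  next
    fix x assume h: "snd (reps ! j) \<subseteq> fst (reps ! i)" and xi: "x \<in> snd (reps ! i)"
    then have x: "x \<in> V" using subV that by blast
    show "x \<in> fst (reps ! j)" using Fi[OF that(1) x] Fi[OF that(2) x] h xi by blast
  qed
  show ?thesis using N1 N2 by blast
qed

end
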